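(* For each natural number $n$, the restriction of the preorder $\leqslant_{\vec{|\square[n]|}}$ to the vertex set $\vec{|\mathrm{sk}_0(\square[n])|}$ equals the restriction of the preorder $\leqslant_{\vec{|\mathrm{sk}_1(\square[n])|}}$ to that same vertex set.
   Context: Streams: a circulation on a space $X$ assigns to each open $V\subset X$ a preorder $\leqslant_V$ such that for every collection $\mathcal{O}$ of open sets, $\leqslant_{\bigcup\mathcal{O}}$ is the preorder with smallest graph containing $\bigcup_{V\in\mathcal{O}}\mathrm{graph}(\leqslant_V)$; a stream is a space with a circulation, $\leqslant_X$ being the preorder on $X$ itself; stream maps are continuous maps with $f(x)\leqslant_V f(y)$ whenever $x\leqslant_{f^{-1}V}y$. The category of streams is cocomplete with colimits computed on underlying spaces (final circulation). $\square$ is the smallest subcategory of posets and monotone maps closed under cartesian products (unit $[0]=\{0\}$) containing $\delta_\pm:[0]\to[1]=\{0<1\}$; a precubical set is a functor $\square^{op}\to\mathbf{Set}$; $\square[n]=\square(-,[1]^n)$; for a precubical set $X$, $\mathrm{sk}_k(X)$ is the smallest sub-precubical set $A\subseteq X$ with $A_k=X_k$. $\vec\square[1]$ is $[0,1]$ with circulation $x\leqslant_V y$ iff $x\le y$ and $[x,y]\subset V$, $\vec\square[n]$ is its $n$-fold product in streams, and the stream realization of $X$ is the coend $\vec{|X|}=\int^{[1]^n}X_n\cdot\vec\square[n]$ in streams. Thus $\vec{|\square[n]|}=\vec\square[n]$ (underlying space $\mathbb{I}^n$), $\vec{|\mathrm{sk}_0(\square[n])|}$ is the set of vertices $\{0,1\}^n$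 and $\vec{|\mathrm{sk}_1(\square[n])|}$ is the union of the edges of the cube, as streams. *)

theory Defs
  imports "HOL-Analysis.Analysis"
begin

text \<open>Circulations (Krishnan): to each open V a preorder on V, satisfying the
cosheaf-like condition for every collection of open sets. The value on
non-open sets is normalised to the empty relation.\<close>
definition circulation :: "'a topology \<Rightarrow> ('a set \<Rightarrow> ('a \<times> 'a) set) \<Rightarrow> bool" where
  "circulation X C \<longleftrightarrow>
     (\<forall>V. \<not> openin X V \<longrightarrow> C V = {}) \<and>
     (\<forall>V. openin X V \<longrightarrow> preorder_on V (C V)) \<and>
     (\<forall>\<O>. (\<forall>V\<in>\<O>. openin X V) \<longrightarrow> C (\<Union>\<O>) = trancl (\<Union>V\<in>\<O>. C V))"

definition stream_map ::
  "'a topology \<Rightarrow> ('a set \<Rightarrow> ('a \<times> 'a) set) \<Rightarrow> 'b topology \<Rightarrow> ('b set \<Rightarrow> ('b \<times> 'b) set)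
   \<Rightarrow> ('a \<Rightarrow> 'b) \<Rightarrow> bool" where
  "stream_map X C Y D f \<longleftrightarrow> continuous_map X Y f \<and>
     (\<forall>V. openin Y V \<longrightarrow>
        (\<forall>x y. (x, y) \<in> C {z \<in> topspace X. f z \<in> V} \<longrightarrow> (f x, f y) \<in> D V))"

definition I1_top :: "real topology" where
  "I1_top = top_of_set {0..1}"

definition I1_circ :: "real set \<Rightarrow> (real \<times> real) set" where
  "I1_circ V = (if openin I1_top V then {(x, y). x \<le> y \<and> {x..y} \<subseteq> V} else {})"

text \<open>The n-cube, points are extensional functions on {..<n}.\<close>
definition cube_top :: "nat \<Rightarrow> (nat \<Rightarrow> real) topology" where
  "cube_top n = product_topology (\<lambda>_. I1_top) {..<n}"

text \<open>Circulation of the n-fold product stream: the initial circulation on the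
product space with respect to the projections, i.e. the greatest circulation
making all projections stream maps.\<close>
definition cube_circ :: "nat \<Rightarrow> (nat \<Rightarrow> real) set \<Rightarrow> ((nat \<Rightarrow> real) \<times> (nat \<Rightarrow> real)) set" where
  "cube_circ n = (GREATEST D. circulation (cube_top n) D \<and>
      (\<forall>i<n. stream_map (cube_top n) D I1_top I1_circ (\<lambda>x. x i)))"

text \<open>Vertices {0,1}^n (realization of the 0-skeleton).\<close>
definition vertices :: "nat \<Rightarrow> (nat \<Rightarrow> real) set" where
  "vertices n = PiE {..<n} (\<lambda>_. {0, 1})"

definition edge_map :: "nat \<Rightarrow> (nat \<Rightarrow> real) \<Rightarrow> real \<Rightarrow> (nat \<Rightarrow> real)" where
  "edge_map i v t = v(i := t)"

definition skel1_set :: "nat \<Rightarrow> (nat \<Rightarrow> real) set" where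
  "skel1_set n = vertices n \<union>
     (\<Union>i\<in>{..<n}. \<Union>v\<in>{v \<in> vertices n. v i = 0}. edge_map i v ` {0..1})"

definition skel1_top :: "nat \<Rightarrow> (nat \<Rightarrow> real) topology" where
  "skel1_top n = subtopology (cube_top n) (skel1_set n)"

text \<open>Circulation of the realization of the 1-skeleton: the final circulation on
the union of edges with respect to the edge maps, i.e. the least circulation
making all edge maps stream maps (vertex maps from the one-point stream are
stream maps for every circulation).\<close>
definition skel1_circ :: "nat \<Rightarrow> (nat \<Rightarrow> real) set \<Rightarrow> ((nat \<Rightarrow> real) \<times> (nat \<Rightarrow> real)) set" where
  "skel1_circ n = (LEAST E. circulation (skel1_top n) E \<and>
      (\<forall>i<n. \<forall>v\<in>vertices n. v i = 0 \<longrightarrow>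
          stream_map I1_top I1_circ (skel1_top n) E (edge_map i v)))"

end

theory Submission
  imports Defs
begin


lemma chain_lemma:
  fixes g :: "real \<Rightarrow> 'a"
  assumes st: "s \<le> t" and cov: "{s..t} \<subseteq> \<Union>\<C>" and op: "\<And>B. B\<in>\<C> \<Longrightarrow> open B"
   and step: "\<And>a b. s \<le> a \<Longrightarrow> a \<le> b \<Longrightarrow> b \<le> t \<Longrightarrow> (\<exists>B\<in>\<C>. {a..b} \<subseteq> B) \<Longrightarrow> (g a, g b) \<in> R"
  shows "(g s, g t) \<in> R\<^sup>*"
proof -
  have "\<C> \<noteq> {}" using st cov by auto
  then obtain \<delta> where d: "0 < \<delta>" and L: "\<And>T. \<lbrakk>T \<subseteq> {s..t}; diameter T < \<delta>\<rbrakk> \<Longrightarrow> \<exists>B \<in> \<C>. T \<subseteq> B"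
    using Lebesgue_number_lemma[of "{s..t}" \<C>] cov op by auto
  have main: "\<forall>b. s \<le> b \<and> b \<le> t \<and> b - s \<le> real k * (\<delta>/2) \<longrightarrow> (g s, g b) \<in> R\<^sup>*" for k
  proof (induction k)
    case 0
    then show ?case by auto
  next
    case (Suc k)
    show ?case
    proof (intro allI impI)
      fix b assume b: "s \<le> b \<and> b \<le> t \<and> b - s \<le> real (Suc k) * (\<delta>/2)"
      show "(g s, g b) \<in> R\<^sup>*"
      proof (cases "b - s \<le> real k * (\<delta>/2)")
        case True
        then show ?thesis using Suc b by blast
      next
        case False
        define a where "a = max s (b - \<delta>/2)"
        have nn: "0 \<le> real k * (\<delta>/2)" using d by simp
        have a1: "s \<le> a" "a \<le> b" "a - s \<le> real k * (\<delta>/2)"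
          using False b d nn by (auto simp: a_def algebra_simps max_def)
        have "(g s, g a) \<in> R\<^sup>*" using Suc a1 b by auto
        moreover have "\<exists>B\<in>\<C>. {a..b} \<subseteq> B"
        proof (rule L)
          show "{a..b} \<subseteq> {s..t}" using a1 b by auto
          show "diameter {a..b} < \<delta>" using a1 d by (auto simp: a_def max_def)
        qed
        then have "(g a, g b) \<in> R" using step a1 b by auto
        ultimately show ?thesis by auto
      qed
    qed
  qed
  obtain k where "(t-s)/(\<delta>/2) \<le> real k" using real_arch_simple by blast
  then have "t - s \<le> real k * (\<delta>/2)" using d by (simp add: field_simps)
  then show ?thesis using main[of k] st by auto
qed

lemma topspace_I1 [simp]: "topspace I1_top = {0..1}"
  by (simp add: I1_top_def)

lemma I1_circ_iff: "(s,t) \<in> I1_circ W \<longleftrightarrow> openin I1_top W \<and> s \<le> t \<and> {s..t} \<subseteq> W"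
  by (auto simp: I1_circ_def)

lemma I1_circ_trans: "(a,b) \<in> I1_circ V \<Longrightarrow> (b,c) \<in> I1_circ V \<Longrightarrow> (a,c) \<in> I1_circ V"
  unfolding I1_circ_iff by (auto simp: subset_iff) (meson linorder_le_cases)

definition Gen :: "(real \<Rightarrow> 'a) set \<Rightarrow> 'a set \<Rightarrow> ('a \<times> 'a) set" where
  "Gen F U = {(\<gamma> s, \<gamma> t) | \<gamma> s t. \<gamma> \<in> F \<and> (s,t) \<in> I1_circ {z \<in> topspace I1_top. \<gamma> z \<in> U}}"

definition Fin :: "'a topology \<Rightarrow> (real \<Rightarrow> 'a) set \<Rightarrow> 'a set \<Rightarrow> ('a \<times> 'a) set" where
  "Fin X F U = (if openin X U then trancl (Id_on U \<union> Gen F U) else {})"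

lemma Gen_sub: "Gen F U \<subseteq> U \<times> U"
  unfolding Gen_def I1_circ_iff by auto

lemma Gen_mono:
  assumes cont: "\<And>\<gamma>. \<gamma> \<in> F \<Longrightarrow> continuous_map I1_top X \<gamma>"
    and "openin X U'" "U \<subseteq> U'" "openin X U"
  shows "Gen F U \<subseteq> Gen F U'"
proof
  fix p assume "p \<in> Gen F U"
  then obtain \<gamma> s t where p: "p = (\<gamma> s, \<gamma> t)" "\<gamma> \<in> F" "s \<le> t"
      "{s..t} \<subseteq> {z \<in> topspace I1_top. \<gamma> z \<in> U}"
    unfolding Gen_def I1_circ_iff by blast
  have "openin I1_top {z \<in> topspace I1_top. \<gamma> z \<in> U'}"
    using openin_continuous_map_preimage[OF cont[OF p(2)] assms(2)] .
  then have "(s,t) \<in> I1_circ {z \<in> topspace I1_top. \<gamma> z \<in> U'}"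
    using p assms(3) unfolding I1_circ_iff by auto
  then show "p \<in> Gen F U'" using p unfolding Gen_def by blast
qed

lemma Fin_sub: "Fin X F U \<subseteq> U \<times> U"
proof -
  have "Id_on U \<union> Gen F U \<subseteq> U \<times> U" using Gen_sub by auto
  then have "(Id_on U \<union> Gen F U)\<^sup>+ \<subseteq> U \<times> U" by (rule trancl_subset_Sigma)
  then show ?thesis unfolding Fin_def by auto
qed

lemma Fin_mono:
  assumes cont: "\<And>\<gamma>. \<gamma> \<in> F \<Longrightarrow> continuous_map I1_top X \<gamma>"
    and "openin X U'" "U \<subseteq> U'"
  shows "Fin X F U \<subseteq> Fin X F U'"
proof (cases "openin X U")
  case True
  have "Id_on U \<union> Gen F U \<subseteq> Id_on U' \<union> Gen F U'"
    using Gen_mono[OF cont assms(2,3) True] assms(3) by auto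
  then have "(Id_on U \<union> Gen F U)\<^sup>+ \<subseteq> (Id_on U' \<union> Gen F U')\<^sup>+"
    by (meson subsetI trancl_mono)
  then show ?thesis using True assms(2) unfolding Fin_def by simp
next
  case False
  then show ?thesis by (simp add: Fin_def)
qed

lemma trancl_sub_trans: "A \<subseteq> B \<Longrightarrow> trans B \<Longrightarrow> A\<^sup>+ \<subseteq> B"
  by (metis trancl_id trancl_mono subsetI)

lemma Fin_circulation:
  assumes cont: "\<And>\<gamma>. \<gamma> \<in> F \<Longrightarrow> continuous_map I1_top X \<gamma>"
  shows "circulation X (Fin X F)"
  unfolding circulation_def
proof (intro conjI allI impI)
  fix V assume "\<not> openin X V" then show "Fin X F V = {}" by (simp add: Fin_def)
next
  fix V assume "openin X V"
  then show "preorder_on V (Fin X F V)"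
    unfolding preorder_on_def
  proof (intro conjI)
    show "Fin X F V \<subseteq> V \<times> V" by (rule Fin_sub)
    show "refl_on V (Fin X F V)" using \<open>openin X V\<close> by (auto simp: Fin_def refl_on_def)
    show "trans (Fin X F V)" using \<open>openin X V\<close> by (simp add: Fin_def trans_trancl)
  qed
next
  fix \<O> assume op: "\<forall>V\<in>\<O>. openin X V"
  define U where "U = \<Union>\<O>"
  have opU: "openin X U" using op by (auto simp: U_def)
  define R where "R = (\<Union>V\<in>\<O>. Fin X F V)"
  have RU: "R \<subseteq> Fin X F U"
    using Fin_mono[OF cont opU] by (auto simp: R_def U_def)
  have transU: "trans (Fin X F U)" using opU by (simp add: Fin_def)
  have "R\<^sup>+ \<subseteq> Fin X F U" by (rule trancl_sub_trans[OF RU transU])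
  moreover have "Fin X F U \<subseteq> R\<^sup>+"
  proof -
    have "Id_on U \<union> Gen F U \<subseteq> R\<^sup>+"
    proof
      fix p assume "p \<in> Id_on U \<union> Gen F U"
      then show "p \<in> R\<^sup>+"
      proof
        assume "p \<in> Id_on U"
        then obtain x V where x: "p = (x,x)" "x \<in> V" "V \<in> \<O>" by (auto simp: U_def)
        then have "p \<in> Fin X F V" using op by (auto simp: Fin_def)
        then show ?thesis using x by (auto simp: R_def)
      next
        assume "p \<in> Gen F U"
        then obtain \<gamma> s t where p: "p = (\<gamma> s, \<gamma> t)" "\<gamma> \<in> F" "s \<le> t"
            "{s..t} \<subseteq> {z \<in> topspace I1_top. \<gamma> z \<in> U}"
          unfolding Gen_def I1_circ_iff by blast
        define \<C> where "\<C> = {B. open B \<and> (\<exists>V\<in>\<O>. {0..1} \<inter> B \<subseteq> {z \<in> {0..1}. \<gamma> z \<in> V})}"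
        have "(\<gamma> s, \<gamma> t) \<in> R\<^sup>*"
        proof (rule chain_lemma[where \<C> = \<C>])
          show "s \<le> t" by fact
          show "{s..t} \<subseteq> \<Union>\<C>"
          proof
            fix z assume z: "z \<in> {s..t}"
            then have z1: "z \<in> {0..1}" "\<gamma> z \<in> U" using p(4) by auto
            then obtain V where V: "V \<in> \<O>" "\<gamma> z \<in> V" by (auto simp: U_def)
            have "openin I1_top {z \<in> topspace I1_top. \<gamma> z \<in> V}"
              using openin_continuous_map_preimage[OF cont[OF p(2)]] op V by auto
            then obtain B where B: "open B" "{z \<in> {0..1}. \<gamma> z \<in> V} = {0..1} \<inter> B"
              by (auto simp: I1_top_def openin_open)
            then have "B \<in> \<C>" using V by (auto simp: \<C>_def)
            moreover have "z \<in> B" using B z1 V by blast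
            ultimately show "z \<in> \<Union>\<C>" by blast
          qed
          show "\<And>B. B \<in> \<C> \<Longrightarrow> open B" by (auto simp: \<C>_def)
          fix a b assume ab: "s \<le> a" "a \<le> b" "b \<le> t" "\<exists>B\<in>\<C>. {a..b} \<subseteq> B"
          then obtain B V where BV: "{a..b} \<subseteq> B" "V \<in> \<O>" "{0..1} \<inter> B \<subseteq> {z \<in> {0..1}. \<gamma> z \<in> V}"
            by (auto simp: \<C>_def)
          have "{a..b} \<subseteq> {s..t}" using ab by auto
          also have "\<dots> \<subseteq> {0..1}" using p(4) by auto
          finally have ab01: "{a..b} \<subseteq> {0..1}" .
          have "openin I1_top {z \<in> topspace I1_top. \<gamma> z \<in> V}"
            using openin_continuous_map_preimage[OF cont[OF p(2)]] op BV by auto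
          then have "(a,b) \<in> I1_circ {z \<in> topspace I1_top. \<gamma> z \<in> V}"
          proof -
            have "{a..b} \<subseteq> {0..1} \<inter> B" using ab01 BV(1) by auto
            also have "\<dots> \<subseteq> {z \<in> topspace I1_top. \<gamma> z \<in> V}" using BV(3) by simp
            finally show ?thesis unfolding I1_circ_iff using ab(2) \<open>openin I1_top _\<close> by auto
          qed
          then have "(\<gamma> a, \<gamma> b) \<in> Gen F V" using p(2) unfolding Gen_def by blast
          then have "(\<gamma> a, \<gamma> b) \<in> Fin X F V" using op BV by (auto simp: Fin_def)
          then show "(\<gamma> a, \<gamma> b) \<in> R" using BV by (auto simp: R_def)
        qed
        then show ?thesis
        proof (cases rule: rtranclE)
          case base
          have "\<gamma> s \<in> U" using p by auto
          then obtain V where V: "V \<in> \<O>" "\<gamma> s \<in> V" by (auto simp: U_def)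
          then have "(\<gamma> s, \<gamma> s) \<in> Fin X F V" using op by (auto simp: Fin_def)
          then show ?thesis using base p V by (auto simp: R_def)
        next
          case (step y)
          then show ?thesis using p by auto
        qed
      qed
    qed
    then have "(Id_on U \<union> Gen F U)\<^sup>+ \<subseteq> R\<^sup>+"
      by (rule trancl_sub_trans) (rule trans_trancl)
    then show ?thesis using opU by (simp add: Fin_def)
  qed
  ultimately show "Fin X F (\<Union>\<O>) = (\<Union>V\<in>\<O>. Fin X F V)\<^sup>+"
    by (auto simp: R_def U_def)
qed

lemma Fin_stream:
  assumes "continuous_map I1_top X \<gamma>" "\<gamma> \<in> F"
  shows "stream_map I1_top I1_circ X (Fin X F) \<gamma>"
  unfolding stream_map_def
proof (intro conjI allI impI)
  show "continuous_map I1_top X \<gamma>" by fact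
  fix V x y assume V: "openin X V" and xy: "(x, y) \<in> I1_circ {z \<in> topspace I1_top. \<gamma> z \<in> V}"
  then have "(\<gamma> x, \<gamma> y) \<in> Gen F V" using assms(2) unfolding Gen_def by blast
  then show "(\<gamma> x, \<gamma> y) \<in> Fin X F V" using V by (auto simp: Fin_def)
qed

lemma Fin_least:
  assumes "circulation X D" "\<And>\<gamma>. \<gamma> \<in> F \<Longrightarrow> stream_map I1_top I1_circ X D \<gamma>"
  shows "Fin X F \<le> D"
proof (rule le_funI)
  fix U show "Fin X F U \<subseteq> D U"
  proof (cases "openin X U")
    case True
    then have po: "preorder_on U (D U)" using assms(1) by (auto simp: circulation_def)
    have "Id_on U \<subseteq> D U" using po by (auto simp: preorder_on_def refl_on_def)
    moreover have "Gen F U \<subseteq> D U"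
      using assms(2) True unfolding Gen_def stream_map_def by blast
    ultimately have "(Id_on U \<union> Gen F U)\<^sup>+ \<subseteq> D U"
      using po by (intro trancl_sub_trans) (auto simp: preorder_on_def)
    then show ?thesis using True by (simp add: Fin_def)
  next
    case False then show ?thesis by (simp add: Fin_def)
  qed
qed

lemma trancl_I1:
  assumes "A \<subseteq> {(x,y). (f x, f y) \<in> I1_circ V}"
  shows "A\<^sup>+ \<subseteq> {(x,y). (f x, f y) \<in> I1_circ V}"
proof (rule trancl_sub_trans[OF assms])
  show "trans {(x,y). (f x, f y) \<in> I1_circ V}"
    by (auto simp: trans_def intro: I1_circ_trans)
qed

definition Pc :: "nat \<Rightarrow> ((nat \<Rightarrow> real) set \<Rightarrow> ((nat \<Rightarrow> real) \<times> (nat \<Rightarrow> real)) set) \<Rightarrow> bool" where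
  "Pc n D \<longleftrightarrow> circulation (cube_top n) D \<and>
      (\<forall>i<n. stream_map (cube_top n) D I1_top I1_circ (\<lambda>x. x i))"

definition lin :: "nat \<Rightarrow> (nat \<Rightarrow> real) \<Rightarrow> (nat \<Rightarrow> real) \<Rightarrow> real \<Rightarrow> (nat \<Rightarrow> real)" where
  "lin n v w t = (\<lambda>i. if i < n then v i + t * (w i - v i) else undefined)"

lemma topspace_cube: "topspace (cube_top n) = PiE {..<n} (\<lambda>_. {0..1})"
  by (simp add: cube_top_def)

lemma lin_range:
  fixes a b t :: real
  assumes "0 \<le> a" "a \<le> b" "b \<le> 1" "0 \<le> t" "t \<le> 1"
  shows "0 \<le> a + t * (b - a) \<and> a + t * (b - a) \<le> 1"
proof -
  have "0 \<le> t * (b - a)" using assms by simp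
  moreover have "t * (b - a) \<le> 1 * (b - a)" using assms by (intro mult_right_mono) auto
  ultimately show ?thesis using assms by auto
qed

lemma lin_cont:
  assumes v: "v \<in> topspace (cube_top n)" and w: "w \<in> topspace (cube_top n)"
    and le: "\<And>i. i < n \<Longrightarrow> v i \<le> w i"
  shows "continuous_map I1_top (cube_top n) (lin n v w)"
  unfolding cube_top_def continuous_map_componentwise
proof (intro conjI ballI)
  show "lin n v w ` topspace I1_top \<subseteq> extensional {..<n}"
    by (auto simp: lin_def extensional_def)
  fix k assume k: "k \<in> {..<n}"
  have vk: "0 \<le> v k" "v k \<le> 1" "0 \<le> w k" "w k \<le> 1" using v w k by (auto simp: topspace_cube PiE_iff)
  have "continuous_on {0..1} (\<lambda>t. v k + t * (w k - v k))" by (intro continuous_intros)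
  moreover have "(\<lambda>t. v k + t * (w k - v k)) \<in> {0..1} \<rightarrow> {0..1}"
    using lin_range[of "v k" "w k"] vk le k by auto
  ultimately have "continuous_map I1_top I1_top (\<lambda>t. v k + t * (w k - v k))"
    unfolding I1_top_def by (simp add: continuous_map_in_subtopology)
  then show "continuous_map I1_top I1_top (\<lambda>x. lin n v w x k)"
    using k by (simp add: lin_def)
qed

lemma lin_Pc:
  assumes v: "v \<in> topspace (cube_top n)" and w: "w \<in> topspace (cube_top n)"
    and le: "\<And>i. i < n \<Longrightarrow> v i \<le> w i"
  shows "Pc n (Fin (cube_top n) {lin n v w})"
  unfolding Pc_def
proof (intro conjI allI impI)
  have cont: "continuous_map I1_top (cube_top n) (lin n v w)" by (rule lin_cont[OF v w le])
  show "circulation (cube_top n) (Fin (cube_top n) {lin n v w})"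
    by (rule Fin_circulation) (use cont in auto)
  fix i assume i: "i < n"
  show "stream_map (cube_top n) (Fin (cube_top n) {lin n v w}) I1_top I1_circ (\<lambda>x. x i)"
    unfolding stream_map_def
  proof (intro conjI allI impI)
    show cm: "continuous_map (cube_top n) I1_top (\<lambda>x. x i)"
      unfolding cube_top_def using i by (intro continuous_map_product_projection) auto
    fix V x y assume V: "openin I1_top V"
      and xy: "(x, y) \<in> Fin (cube_top n) {lin n v w} {z \<in> topspace (cube_top n). z i \<in> V}"
    define U where "U = {z \<in> topspace (cube_top n). z i \<in> V}"
    have opU: "openin (cube_top n) U" unfolding U_def by (rule openin_continuous_map_preimage[OF cm V])
    have "Id_on U \<union> Gen {lin n v w} U \<subseteq> {(x,y). (x i, y i) \<in> I1_circ V}"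
    proof
      fix p assume "p \<in> Id_on U \<union> Gen {lin n v w} U"
      then show "p \<in> {(x,y). (x i, y i) \<in> I1_circ V}"
      proof
        assume "p \<in> Id_on U" then show ?thesis using V by (auto simp: U_def I1_circ_iff)
      next
        assume "p \<in> Gen {lin n v w} U"
        then obtain s t where p: "p = (lin n v w s, lin n v w t)" "s \<le> t"
            "{s..t} \<subseteq> {z \<in> topspace I1_top. lin n v w z \<in> U}"
          unfolding Gen_def I1_circ_iff by blast
        define d where "d = w i - v i"
        have d: "0 \<le> d" using le i by (simp add: d_def)
        have ls: "lin n v w s i = v i + s * d" "lin n v w t i = v i + t * d"
          using i by (auto simp: lin_def d_def)
        have "s * d \<le> t * d" using p(2) d by (intro mult_right_mono)
        then have le2: "lin n v w s i \<le> lin n v w t i" using ls by simp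
        have "{lin n v w s i..lin n v w t i} \<subseteq> V"
        proof
          fix c assume c: "c \<in> {lin n v w s i..lin n v w t i}"
          show "c \<in> V"
          proof (cases "d = 0")
            case True
            then have "c = lin n v w s i" using c ls by auto
            moreover have "lin n v w s \<in> U" using p(2,3) by auto
            ultimately show ?thesis by (simp add: U_def)
          next
            case False
            then have dp: "d > 0" using d by simp
            define z where "z = (c - v i) / d"
            have "s * d \<le> c - v i" "c - v i \<le> t * d" using c ls by auto
            then have z: "s \<le> z" "z \<le> t" using dp by (auto simp: z_def field_simps)
            then have "lin n v w z \<in> U" using p(3) by auto
            moreover have "lin n v w z i = c" using i dp by (simp add: lin_def z_def d_def[symmetric])
            ultimately show ?thesis by (auto simp: U_def)
          qed
        qed
        then show ?thesis using p(1) le2 V by (auto simp: I1_circ_iff)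
      qed
    qed
    then have "(Id_on U \<union> Gen {lin n v w} U)\<^sup>+ \<subseteq> {(x,y). (x i, y i) \<in> I1_circ V}"
      by (rule trancl_I1)
    then show "(x i, y i) \<in> I1_circ V" using xy opU by (auto simp: Fin_def U_def)
  qed
qed

definition Sc :: "nat \<Rightarrow> (nat \<Rightarrow> real) set \<Rightarrow> ((nat \<Rightarrow> real) \<times> (nat \<Rightarrow> real)) set" where
  "Sc n U = (\<Union>{D U | D. Pc n D})\<^sup>+"

lemma Pc_ex: "\<exists>D. Pc n D"
proof -
  define p0 :: "nat \<Rightarrow> real" where "p0 = (\<lambda>i. if i < n then 0 else undefined)"
  have "p0 \<in> topspace (cube_top n)" by (auto simp: topspace_cube p0_def PiE_iff extensional_def)
  then show ?thesis using lin_Pc[of p0 n p0] by auto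
qed

lemma Pc_mono: "Pc n D \<Longrightarrow> openin (cube_top n) V \<Longrightarrow> V \<subseteq> U \<Longrightarrow> openin (cube_top n) U \<Longrightarrow> D V \<subseteq> D U"
proof -
  assume a: "Pc n D" "openin (cube_top n) V" "V \<subseteq> U" "openin (cube_top n) U"
  then have h: "\<forall>\<O>. (\<forall>x\<in>\<O>. openin (cube_top n) x) \<longrightarrow> D (\<Union>\<O>) = (\<Union>W\<in>\<O>. D W)\<^sup>+"
    using a(1) unfolding Pc_def circulation_def by blast
  have "D (\<Union>{V, U}) = (\<Union>W\<in>{V,U}. D W)\<^sup>+" using h[rule_format, of "{V,U}"] a by blast
  moreover have "\<Union>{V, U} = U" using a by auto
  ultimately have "D U = (D V \<union> D U)\<^sup>+" by simp
  then show ?thesis by auto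
qed

lemma Sc_Pc: "Pc n (Sc n)"
  unfolding Pc_def
proof (intro conjI allI impI)
  show "circulation (cube_top n) (Sc n)"
    unfolding circulation_def
  proof (intro conjI allI impI)
    fix V assume "\<not> openin (cube_top n) V"
    then have "\<forall>D. Pc n D \<longrightarrow> D V = {}" by (auto simp: Pc_def circulation_def)
    then have e: "\<Union>{D V | D. Pc n D} = {}" by auto
    show "Sc n V = {}" unfolding Sc_def e by simp
  next
    fix V assume V: "openin (cube_top n) V"
    show "preorder_on V (Sc n V)"
      unfolding preorder_on_def
    proof (intro conjI)
      have "\<Union>{D V | D. Pc n D} \<subseteq> V \<times> V"
        using V by (auto simp: Pc_def circulation_def preorder_on_def)
      then show "Sc n V \<subseteq> V \<times> V" unfolding Sc_def by (rule trancl_subset_Sigma)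
      obtain D0 where D0: "Pc n D0" using Pc_ex by blast
      then have "refl_on V (D0 V)" using V by (auto simp: Pc_def circulation_def preorder_on_def)
      then show "refl_on V (Sc n V)" using D0 unfolding Sc_def refl_on_def by blast
      show "trans (Sc n V)" unfolding Sc_def by (rule trans_trancl)
    qed
  next
    fix \<O> assume op: "\<forall>V\<in>\<O>. openin (cube_top n) V"
    have opU: "openin (cube_top n) (\<Union>\<O>)" using op by auto
    have "\<Union>{D (\<Union>\<O>) | D. Pc n D} \<subseteq> (\<Union>V\<in>\<O>. Sc n V)\<^sup>+"
    proof (clarsimp)
      fix D a b assume D: "Pc n D" and ab: "(a,b) \<in> D (\<Union>\<O>)"
      have eq: "D (\<Union>\<O>) = (\<Union>V\<in>\<O>. D V)\<^sup>+" using D op by (auto simp: Pc_def circulation_def)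
      have sub: "(\<Union>V\<in>\<O>. D V) \<subseteq> (\<Union>V\<in>\<O>. Sc n V)" using D by (auto simp: Sc_def)
      have "(a,b) \<in> (\<Union>V\<in>\<O>. D V)\<^sup>+" using ab eq by simp
      then show "(a,b) \<in> (\<Union>V\<in>\<O>. Sc n V)\<^sup>+" using sub by (rule trancl_mono)
    qed
    then have 1: "Sc n (\<Union>\<O>) \<subseteq> (\<Union>V\<in>\<O>. Sc n V)\<^sup>+"
      unfolding Sc_def[of n "\<Union>\<O>"] by (rule trancl_sub_trans) (rule trans_trancl)
    have "(\<Union>V\<in>\<O>. Sc n V) \<subseteq> Sc n (\<Union>\<O>)"
    proof -
      have "Sc n V \<subseteq> Sc n (\<Union>\<O>)" if "V \<in> \<O>" for V
      proof -
        have "\<Union>{D V | D. Pc n D} \<subseteq> \<Union>{D (\<Union>\<O>) | D. Pc n D}"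
        proof (intro subsetI, elim UnionE CollectE exE conjE)
          fix p X D assume "p \<in> X" "X = D V" "Pc n D"
          moreover have "D V \<subseteq> D (\<Union>\<O>)" using Pc_mono[of n D V "\<Union>\<O>"] \<open>Pc n D\<close> op that opU by blast
          ultimately show "p \<in> \<Union>{D (\<Union>\<O>) | D. Pc n D}" by blast
        qed
        then show ?thesis unfolding Sc_def by (meson subsetI trancl_mono)
      qed
      then show ?thesis by auto
    qed
    then have 2: "(\<Union>V\<in>\<O>. Sc n V)\<^sup>+ \<subseteq> Sc n (\<Union>\<O>)"
      by (rule trancl_sub_trans) (simp add: Sc_def trans_trancl)
    show "Sc n (\<Union>\<O>) = (\<Union>V\<in>\<O>. Sc n V)\<^sup>+" using 1 2 by blast
  qed
next
  fix i assume i: "i < n"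
  show "stream_map (cube_top n) (Sc n) I1_top I1_circ (\<lambda>x. x i)"
    unfolding stream_map_def
  proof (intro conjI allI impI)
    show "continuous_map (cube_top n) I1_top (\<lambda>x. x i)"
      unfolding cube_top_def using i by (intro continuous_map_product_projection) auto
    fix V x y assume V: "openin I1_top V"
      and xy: "(x, y) \<in> Sc n {z \<in> topspace (cube_top n). z i \<in> V}"
    have "\<Union>{D {z \<in> topspace (cube_top n). z i \<in> V} | D. Pc n D} \<subseteq> {(x,y). (x i, y i) \<in> I1_circ V}"
      using i V by (auto simp: Pc_def stream_map_def)
    then have "Sc n {z \<in> topspace (cube_top n). z i \<in> V} \<subseteq> {(x,y). (x i, y i) \<in> I1_circ V}"
      unfolding Sc_def by (rule trancl_I1)
    then show "(x i, y i) \<in> I1_circ V" using xy by auto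
  qed
qed

lemma cube_circ_eq: "cube_circ n = Sc n"
proof -
  have "cube_circ n = Greatest (Pc n)" unfolding cube_circ_def Pc_def by simp
  also have "\<dots> = Sc n"
  proof (rule Greatest_equality)
    show "Pc n (Sc n)" by (rule Sc_Pc)
    fix D assume "Pc n D"
    then show "D \<le> Sc n" unfolding Sc_def by (auto intro!: le_funI)
  qed
  finally show ?thesis .
qed



lemma Fin_01:
  assumes "continuous_map I1_top X \<gamma>" "\<gamma> \<in> F"
  shows "(\<gamma> 0, \<gamma> 1) \<in> Fin X F (topspace X)"
proof -
  have "{z \<in> topspace I1_top. \<gamma> z \<in> topspace X} = {0..1}"
    using continuous_map_image_subset_topspace[OF assms(1)] unfolding topspace_I1 by blast
  moreover have "openin I1_top {z \<in> topspace I1_top. \<gamma> z \<in> topspace X}"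
    using openin_continuous_map_preimage[OF assms(1) openin_topspace] .
  ultimately have "(0,1) \<in> I1_circ {z \<in> topspace I1_top. \<gamma> z \<in> topspace X}"
    unfolding I1_circ_iff by auto
  then have "(\<gamma> 0, \<gamma> 1) \<in> Gen F (topspace X)" using assms(2) unfolding Gen_def by blast
  then show ?thesis unfolding Fin_def by (simp add: r_into_trancl')
qed

lemma vertices_sub: "vertices n \<subseteq> topspace (cube_top n)"
  unfolding vertices_def topspace_cube by (intro PiE_mono) auto

lemma cube_part:
  assumes v: "v \<in> vertices n" and w: "w \<in> vertices n"
  shows "(v, w) \<in> cube_circ n (topspace (cube_top n)) \<longleftrightarrow> (\<forall>i<n. v i \<le> w i)"
proof
  assume vw: "(v, w) \<in> cube_circ n (topspace (cube_top n))"
  show "\<forall>i<n. v i \<le> w i"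
  proof (intro allI impI)
    fix i assume i: "i < n"
    have "stream_map (cube_top n) (Sc n) I1_top I1_circ (\<lambda>x. x i)"
      using Sc_Pc i unfolding Pc_def by blast
    then have h0: "\<forall>V. openin I1_top V \<longrightarrow> (\<forall>x y. (x, y) \<in> Sc n {z \<in> topspace (cube_top n). z i \<in> V} \<longrightarrow> (x i, y i) \<in> I1_circ V)"
      unfolding stream_map_def by blast
    have op01: "openin I1_top {0..1}" using openin_topspace[of I1_top] by simp
    have h: "(x, y) \<in> Sc n {z \<in> topspace (cube_top n). z i \<in> {0..1}} \<Longrightarrow> (x i, y i) \<in> I1_circ {0..1}" for x y
      using h0 op01 by blast
    have "{z \<in> topspace (cube_top n). z i \<in> {0..1}} = topspace (cube_top n)"
      using i unfolding topspace_cube by (blast dest: PiE_mem)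
    then have "(v i, w i) \<in> I1_circ {0..1}" using h vw by (simp add: cube_circ_eq)
    then show "v i \<le> w i" by (simp add: I1_circ_iff)
  qed
next
  assume le: "\<forall>i<n. v i \<le> w i"
  have vt: "v \<in> topspace (cube_top n)" "w \<in> topspace (cube_top n)" using v w vertices_sub by auto
  have P: "Pc n (Fin (cube_top n) {lin n v w})" using lin_Pc[OF vt] le by auto
  have c: "continuous_map I1_top (cube_top n) (lin n v w)" using lin_cont[OF vt] le by auto
  have "(lin n v w 0, lin n v w 1) \<in> Fin (cube_top n) {lin n v w} (topspace (cube_top n))"
    by (rule Fin_01[OF c]) simp
  moreover have "lin n v w 0 = v"
  proof (rule ext)
    fix i show "lin n v w 0 i = v i"
    proof (cases "i<n")
      case False
      have "v i = undefined" using PiE_arb[of v "{..<n}" "\<lambda>_. {0..1}" i] vt(1) False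
        unfolding topspace_cube by blast
      then show ?thesis using False unfolding lin_def by simp
    qed (simp add: lin_def)
  qed
  moreover have "lin n v w 1 = w"
  proof (rule ext)
    fix i show "lin n v w 1 i = w i"
    proof (cases "i<n")
      case False
      have "w i = undefined" using PiE_arb[of w "{..<n}" "\<lambda>_. {0..1}" i] vt(2) False
        unfolding topspace_cube by blast
      then show ?thesis using False unfolding lin_def by simp
    qed (simp add: lin_def)
  qed
  ultimately have "(v, w) \<in> Fin (cube_top n) {lin n v w} (topspace (cube_top n))" by simp
  moreover have "Fin (cube_top n) {lin n v w} (topspace (cube_top n)) \<subseteq> \<Union>{D (topspace (cube_top n)) | D. Pc n D}"
    using P by (intro Union_upper) blast
  ultimately show "(v, w) \<in> cube_circ n (topspace (cube_top n))"
    unfolding cube_circ_eq Sc_def by (meson r_into_trancl subsetD)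
qed


definition Fe :: "nat \<Rightarrow> (real \<Rightarrow> (nat \<Rightarrow> real)) set" where
  "Fe n = {edge_map i v | i v. i < n \<and> v \<in> vertices n \<and> v i = 0}"

lemma upd_PiE:
  assumes "f \<in> PiE {..<n} B" "i < n" "y \<in> B i"
  shows "f(i := y) \<in> PiE {..<n} B"
proof -
  have "f(i := y) \<in> PiE (insert i {..<n}) B" by (rule PiE_fun_upd[OF assms(3,1)])
  moreover have "insert i {..<n} = {..<n}" using assms(2) by auto
  ultimately show ?thesis by simp
qed

lemma vert_val: "v \<in> vertices n \<Longrightarrow> j < n \<Longrightarrow> v j = 0 \<or> v j = 1"
  unfolding vertices_def using PiE_mem[of v "{..<n}" "\<lambda>_. {0,1}" j] by blast

lemma edge_top:
  assumes "v \<in> vertices n" "i < n" "t \<in> {0..1}"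
  shows "edge_map i v t \<in> topspace (cube_top n)"
proof -
  have "v \<in> topspace (cube_top n)" using assms(1) vertices_sub by blast
  then show ?thesis unfolding edge_map_def topspace_cube
    using upd_PiE[of v n "\<lambda>_. {0..1}" i t] assms(2,3) by blast
qed

lemma skel_sub: "skel1_set n \<subseteq> topspace (cube_top n)"
  unfolding skel1_set_def using vertices_sub edge_top by blast

lemma topspace_skel: "topspace (skel1_top n) = skel1_set n"
  using skel_sub unfolding skel1_top_def topspace_subtopology by blast

lemma edge_cont:
  assumes v: "v \<in> vertices n" and i: "i < n" and vi: "v i = 0"
  shows "continuous_map I1_top (skel1_top n) (edge_map i v)"
  unfolding skel1_top_def continuous_map_in_subtopology
proof (intro conjI)
  show "edge_map i v \<in> topspace I1_top \<rightarrow> skel1_set n"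
  proof
    fix t assume t: "t \<in> topspace I1_top"
    have "v \<in> {v \<in> vertices n. v i = 0}" using v vi by blast
    then have "edge_map i v t \<in> (\<Union>v\<in>{v \<in> vertices n. v i = 0}. edge_map i v ` {0..1})"
      using t by auto
    then show "edge_map i v t \<in> skel1_set n" unfolding skel1_set_def using i by blast
  qed
  show "continuous_map I1_top (cube_top n) (edge_map i v)"
    unfolding cube_top_def continuous_map_componentwise
  proof (intro conjI ballI)
    show "edge_map i v ` topspace I1_top \<subseteq> extensional {..<n}"
    proof
      fix x assume "x \<in> edge_map i v ` topspace I1_top"
      then obtain t where t: "t \<in> {0..1}" "x = edge_map i v t" by auto
      then have "x \<in> topspace (cube_top n)" using edge_top[OF v i] by blast
      then show "x \<in> extensional {..<n}" unfolding topspace_cube PiE_def by blast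
    qed
    fix k assume k: "k \<in> {..<n}"
    show "continuous_map I1_top I1_top (\<lambda>x. edge_map i v x k)"
    proof (cases "k = i")
      case True
      then have "(\<lambda>x. edge_map i v x k) = id" by (intro ext) (simp add: edge_map_def)
      then show ?thesis by simp
    next
      case False
      then have e: "(\<lambda>x. edge_map i v x k) = (\<lambda>x. v k)" by (intro ext) (simp add: edge_map_def)
      have "v k = 0 \<or> v k = 1" using vert_val[OF v] k by auto
      then have "v k \<in> topspace I1_top" by auto
      then show ?thesis unfolding e by simp
    qed
  qed
qed

lemma skel1_circ_eq: "skel1_circ n = Fin (skel1_top n) (Fe n)"
proof -
  have cont: "\<And>\<gamma>. \<gamma> \<in> Fe n \<Longrightarrow> continuous_map I1_top (skel1_top n) \<gamma>"
    unfolding Fe_def using edge_cont by blast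
  show ?thesis unfolding skel1_circ_def
  proof (rule Least_equality)
    show "circulation (skel1_top n) (Fin (skel1_top n) (Fe n)) \<and>
      (\<forall>i<n. \<forall>v\<in>vertices n. v i = 0 \<longrightarrow>
          stream_map I1_top I1_circ (skel1_top n) (Fin (skel1_top n) (Fe n)) (edge_map i v))"
    proof (intro conjI allI impI ballI)
      show "circulation (skel1_top n) (Fin (skel1_top n) (Fe n))" by (rule Fin_circulation[OF cont])
      fix i v assume a: "i < n" "v \<in> vertices n" "v i = 0"
      then have "edge_map i v \<in> Fe n" unfolding Fe_def by blast
      then show "stream_map I1_top I1_circ (skel1_top n) (Fin (skel1_top n) (Fe n)) (edge_map i v)"
        by (rule Fin_stream[OF edge_cont[OF a(2,1,3)]])
    qed
    fix D assume D: "circulation (skel1_top n) D \<and>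
      (\<forall>i<n. \<forall>v\<in>vertices n. v i = 0 \<longrightarrow> stream_map I1_top I1_circ (skel1_top n) D (edge_map i v))"
    show "Fin (skel1_top n) (Fe n) \<le> D"
    proof (rule Fin_least)
      show "circulation (skel1_top n) D" using D by blast
      fix \<gamma> assume "\<gamma> \<in> Fe n"
      then obtain i v where iv: "\<gamma> = edge_map i v" "i < n" "v \<in> vertices n" "v i = 0"
        unfolding Fe_def by blast
      have "\<forall>i<n. \<forall>v\<in>vertices n. v i = 0 \<longrightarrow> stream_map I1_top I1_circ (skel1_top n) D (edge_map i v)"
        using D by (rule conjunct2)
      then show "stream_map I1_top I1_circ (skel1_top n) D \<gamma>" using iv by blast
    qed
  qed
qed


lemma Fin_skel_le: "Fin (skel1_top n) (Fe n) U \<subseteq> {(x,y). \<forall>j. x j \<le> y j}"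
proof (cases "openin (skel1_top n) U")
  case True
  have "Id_on U \<union> Gen (Fe n) U \<subseteq> {(x,y). \<forall>j. x j \<le> y j}"
  proof
    fix p assume "p \<in> Id_on U \<union> Gen (Fe n) U"
    then show "p \<in> {(x,y). \<forall>j. x j \<le> y j}"
    proof
      assume "p \<in> Id_on U" then show ?thesis by auto
    next
      assume "p \<in> Gen (Fe n) U"
      then obtain \<gamma> s t where p: "p = (\<gamma> s, \<gamma> t)" "\<gamma> \<in> Fe n" "s \<le> t"
        unfolding Gen_def I1_circ_iff by blast
      then obtain i u where "\<gamma> = edge_map i u" unfolding Fe_def by blast
      then show ?thesis using p by (auto simp: edge_map_def)
    qed
  qed
  moreover have "trans {(x,y). \<forall>j. x j \<le> (y j::real)}"
    unfolding trans_def by (blast intro: order_trans)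
  ultimately have "(Id_on U \<union> Gen (Fe n) U)\<^sup>+ \<subseteq> {(x,y). \<forall>j. x j \<le> y j}"
    by (rule trancl_sub_trans)
  then show ?thesis using True by (simp add: Fin_def)
next
  case False then show ?thesis by (simp add: Fin_def)
qed

lemma skel_chain:
  "\<forall>v. v \<in> vertices n \<longrightarrow> w \<in> vertices n \<longrightarrow> (\<forall>i<n. v i \<le> w i) \<longrightarrow>
     card {j. j < n \<and> v j \<noteq> w j} = k \<longrightarrow>
     (v, w) \<in> Fin (skel1_top n) (Fe n) (topspace (skel1_top n))"
proof (induction k)
  case 0
  show ?case
  proof (intro allI impI)
    fix v assume v: "v \<in> vertices n" and w: "w \<in> vertices n" and le: "\<forall>i<n. v i \<le> w i"
      and c: "card {j. j < n \<and> v j \<noteq> w j} = 0"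
    have fin: "finite {j. j < n \<and> v j \<noteq> w j}" by (rule finite_subset[of _ "{..<n}"]) auto
    then have e: "{j. j < n \<and> v j \<noteq> w j} = {}" using c by simp
    have "v = w"
    proof (rule ext)
      fix j show "v j = w j"
      proof (cases "j < n")
        case True then show ?thesis using e by blast
      next
        case False
        have "v j = undefined" using PiE_arb[of v "{..<n}" "\<lambda>_. {0,1}" j] v False
          unfolding vertices_def by blast
        moreover have "w j = undefined" using PiE_arb[of w "{..<n}" "\<lambda>_. {0,1}" j] w False
          unfolding vertices_def by blast
        ultimately show ?thesis by simp
      qed
    qed
    moreover have "v \<in> topspace (skel1_top n)" using v unfolding topspace_skel skel1_set_def by blast
    ultimately show "(v, w) \<in> Fin (skel1_top n) (Fe n) (topspace (skel1_top n))"
      unfolding Fin_def by (simp add: Id_onI r_into_trancl')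
  qed
next
  case (Suc k)
  show ?case
  proof (intro allI impI)
    fix v assume v: "v \<in> vertices n" and w: "w \<in> vertices n" and le: "\<forall>i<n. v i \<le> w i"
      and c: "card {j. j < n \<and> v j \<noteq> w j} = Suc k"
    have fin: "finite {j. j < n \<and> v j \<noteq> w j}" by (rule finite_subset[of _ "{..<n}"]) auto
    then obtain i where i: "i < n" "v i \<noteq> w i" using c by (metis (mono_tags, lifting) card.empty empty_Collect_eq nat.distinct(1))
    have vi: "v i = 0" and wi: "w i = 1"
      using vert_val[OF v i(1)] vert_val[OF w i(1)] le i by auto
    define u where "u = v(i := 1)"
    have u: "u \<in> vertices n" unfolding u_def vertices_def
      using upd_PiE[of v n "\<lambda>_. {0,1}" i 1] v i(1) unfolding vertices_def by blast
    have ev: "edge_map i v \<in> Fe n" unfolding Fe_def using v i(1) vi by blast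
    have "(edge_map i v 0, edge_map i v 1) \<in> Fin (skel1_top n) (Fe n) (topspace (skel1_top n))"
      by (rule Fin_01[OF edge_cont[OF v i(1) vi] ev])
    moreover have "edge_map i v 0 = v" using vi by (auto simp: edge_map_def)
    moreover have "edge_map i v 1 = u" by (simp add: edge_map_def u_def)
    ultimately have vu: "(v, u) \<in> Fin (skel1_top n) (Fe n) (topspace (skel1_top n))" by simp
    have seteq: "{j. j < n \<and> u j \<noteq> w j} = {j. j < n \<and> v j \<noteq> w j} - {i}"
      using wi by (auto simp: u_def)
    have "card {j. j < n \<and> u j \<noteq> w j} = k"
      unfolding seteq using card_Diff_singleton[of i] i c by simp
    moreover have "\<forall>j<n. u j \<le> w j" using le wi by (simp add: u_def)
    ultimately have uw: "(u, w) \<in> Fin (skel1_top n) (Fe n) (topspace (skel1_top n))"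
      using Suc.IH u w by blast
    have "trans (Fin (skel1_top n) (Fe n) (topspace (skel1_top n)))"
      by (simp add: Fin_def trans_trancl)
    then show "(v, w) \<in> Fin (skel1_top n) (Fe n) (topspace (skel1_top n))"
      using vu uw by (meson transD)
  qed
qed

lemma skel_part:
  assumes v: "v \<in> vertices n" and w: "w \<in> vertices n"
  shows "(v, w) \<in> skel1_circ n (topspace (skel1_top n)) \<longleftrightarrow> (\<forall>i<n. v i \<le> w i)"
proof
  assume "(v, w) \<in> skel1_circ n (topspace (skel1_top n))"
  then show "\<forall>i<n. v i \<le> w i" using Fin_skel_le unfolding skel1_circ_eq by blast
next
  assume "\<forall>i<n. v i \<le> w i"
  then show "(v, w) \<in> skel1_circ n (topspace (skel1_top n))"
    unfolding skel1_circ_eq using skel_chain v w by blast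
qed

theorem mainTheorem8:
  fixes n :: nat
  shows "cube_circ n (topspace (cube_top n)) \<inter> (vertices n \<times> vertices n) =
         skel1_circ n (topspace (skel1_top n)) \<inter> (vertices n \<times> vertices n)"
proof (intro set_eqI)
  fix p :: "(nat \<Rightarrow> real) \<times> (nat \<Rightarrow> real)"
  obtain v w where p: "p = (v, w)" by (cases p)
  show "p \<in> cube_circ n (topspace (cube_top n)) \<inter> (vertices n \<times> vertices n) \<longleftrightarrow>
        p \<in> skel1_circ n (topspace (skel1_top n)) \<inter> (vertices n \<times> vertices n)"
  proof (cases "v \<in> vertices n \<and> w \<in> vertices n")
    case True
    then show ?thesis using cube_part[of v n w] skel_part[of v n w] p by blast
  next
    case False
    then show ?thesis using p by blast
  qed
qed

end
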